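(* Let $\mathcal A=(Q,\Sigma,\delta,\rho)$ be a connected bireversible Mealy automaton whose labeled orbit tree $\mathfrak t(\mathcal A)$ has no active self-liftable branch, and let $\mathfrak j$ be a jungle tree of $\mathfrak t(\mathcal A)$. Then there is a constant $C$ depending only on $\mathfrak j$ such that for every cyclic $\mathfrak j$-word $\mathbf u$, the map $\rho_{\mathbf u}$ has finite order at most $C$.
   Context: Mealy automata. A Mealy automaton is $\mathcal A=(Q,\Sigma,\delta,\rho)$ with $Q,\Sigma$ finite non-empty sets, $\delta=(\delta_i\colon Q\to Q)_{i\in\Sigma}$, $\rho=(\rho_x\colon\Sigma\to\Sigma)_{x\in Q}$; it has a transition $x\xrightarrow{i\mid\rho_x(i)}\delta_i(x)$ for each $x,i$. It is invertible if each $\rho_x$ is a permutation of $\Sigma$, reversible if each $\delta_i$ is a permutation of $Q$, bireversible if it is invertible, reversible, and for each $j\in\Sigma$ the map $x\mapsto\delta_{\rho_x^{-1}(j)}(x)$ is a permutation of $Q$. It is connected if the directed graph on $Q$ with edges $x\to\delta_i(x)$ is connected. Extensions: $\rho_x(i\mathbf s)=\rho_x(i)\rho_{\delta_i(x)}(\mathbf s)$ on $\Sigma^*$; for $\mathbf u=x_1\cdots x_m\in Q^m$, $\rho_{\mathbf u}=\rho_{x_m}\circ\cdots\circ\rho_{x_1}$; dually $\delta_i(x\mathbf u)=\delta_i(x)\delta_{\rho_x(i)}(\mathbf u)$ on $Q^*$ and $\delta_{i_1\cdots i_m}=\delta_{i_m}\circ\cdots\circ\delta_{i_1}$. The $n$-th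 power $\mathcal A^n$ has stateset $Q^n$ and transitions $\mathbf u\xrightarrow{i\mid\rho_{\mathbf u}(i)}\delta_i(\mathbf u)$; for reversible $\mathcal A$ its connected components are the orbits of $Q^n$ under the maps $\delta_{\mathbf s}$, $\mathbf s\in\Sigma^*$. Orbit tree. For reversible $\mathcal A$, $\mathfrak t(\mathcal A)$ is the rooted tree whose vertices at level $n\ge0$ are the connected components of $\mathcal A^n$ (level $0$: the single component of the empty word), with an edge from the component of $\mathbf u\in Q^n$ to the component of $\mathbf ux$ for all $\mathbf u\in Q^n$, $x\in Q$; the edge $C\to D$ is labeled by the integer $\#D/\#C$. Paths go downward; $\top$ and $\bot$ denote the first and last vertex of a path; the level of an edge or path is the level of its top vertex. A word in $Q^*\cup Q^\omega$ represents the initial path (starting at the root) through the components of its prefixes. An edge $e$ is liftable to an edge $f$ if every word of $\bot(e)$ has a suffix in $\bot(f)$; a path $(e_i)_{i\in I}$ is liftable to a path $(f_i)_{i\in I}$ of the same length if each $e_i$ is liftable to $f_i$. An edge $f$ is a legitimate child of an edge $e$ if $\top(f)=\bot(e)$ and $f$ is liftable to $e$. A path or subtree $\mathfrak s$ is $k$-self-liftable ($k>0$) if for every $i\ge0$ every path in $\mathfrak s$ starting at level $i+k$ is liftable to a path in $\mathfrak s$ starting at level $i$; self-liftable if $k$-self-liftable for some $k>0$. A branch is an infinite initial path; it is active if its sequence of labels is not eventually constantly $1$. Jungle trees. Let $\mathbf e$ be a finite 1-self-liftable initial path of length $n$ whose last edge has at least two legitimate children, all of label $1$. The jungle tree $\mathfrak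 j(\mathbf e)$ is the subtree consisting of $\mathbf e$ (its trunk) together with all edges that are descendants of $\bot(\mathbf e)$ and liftable to the last edge of $\mathbf e$. A jungle tree is a tree of this form. A $\mathfrak j$-word is a word of $Q^*\cup Q^\omega$ representing an initial path of $\mathfrak j$; a cyclic $\mathfrak j$-word is a word $\mathbf u\in Q^*$ all of whose powers $\mathbf u^m$ ($m\ge1$) are $\mathfrak j$-words. *)

theory Defs
  imports Main "HOL-Library.Sublist" "HOL-Library.Extended_Nat"
begin

text \<open>A Mealy automaton over the finite non-empty state type 'q and alphabet type 'a is
  given by d i x (= delta_i(x)) and r x i (= rho_x(i)).\<close>

definition invertible :: "('a \<Rightarrow> 'q \<Rightarrow> 'q) \<Rightarrow> ('q \<Rightarrow> 'a \<Rightarrow> 'a) \<Rightarrow> bool" where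
  "invertible d r \<longleftrightarrow> (\<forall>x. bij (r x))"

definition reversible :: "('a \<Rightarrow> 'q \<Rightarrow> 'q) \<Rightarrow> ('q \<Rightarrow> 'a \<Rightarrow> 'a) \<Rightarrow> bool" where
  "reversible d r \<longleftrightarrow> (\<forall>i. bij (d i))"

definition bireversible :: "('a \<Rightarrow> 'q \<Rightarrow> 'q) \<Rightarrow> ('q \<Rightarrow> 'a \<Rightarrow> 'a) \<Rightarrow> bool" where
  "bireversible d r \<longleftrightarrow> invertible d r \<and> reversible d r \<and>
     (\<forall>j. bij (\<lambda>x. d (inv (r x) j) x))"

definition connected_aut :: "('a \<Rightarrow> 'q \<Rightarrow> 'q) \<Rightarrow> bool" where
  "connected_aut d \<longleftrightarrow>
     (let E = {(x, d i x) | x i. True} in \<forall>x y. (x, y) \<in> (E \<union> E\<inverse>)\<^sup>*)"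

fun rho_w :: "('a \<Rightarrow> 'q \<Rightarrow> 'q) \<Rightarrow> ('q \<Rightarrow> 'a \<Rightarrow> 'a) \<Rightarrow> 'q \<Rightarrow> 'a list \<Rightarrow> 'a list" where
  "rho_w d r x [] = []"
| "rho_w d r x (i # s) = r x i # rho_w d r (d i x) s"

fun rho_u :: "('a \<Rightarrow> 'q \<Rightarrow> 'q) \<Rightarrow> ('q \<Rightarrow> 'a \<Rightarrow> 'a) \<Rightarrow> 'q list \<Rightarrow> 'a list \<Rightarrow> 'a list" where
  "rho_u d r [] = id"
| "rho_u d r (x # u) = rho_u d r u \<circ> rho_w d r x"

fun delta_u :: "('a \<Rightarrow> 'q \<Rightarrow> 'q) \<Rightarrow> ('q \<Rightarrow> 'a \<Rightarrow> 'a) \<Rightarrow> 'a \<Rightarrow> 'q list \<Rightarrow> 'q list" where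
  "delta_u d r i [] = []"
| "delta_u d r i (x # u) = d i x # delta_u d r (r x i) u"

fun delta_s :: "('a \<Rightarrow> 'q \<Rightarrow> 'q) \<Rightarrow> ('q \<Rightarrow> 'a \<Rightarrow> 'a) \<Rightarrow> 'a list \<Rightarrow> 'q list \<Rightarrow> 'q list" where
  "delta_s d r [] = id"
| "delta_s d r (i # s) = delta_s d r s \<circ> delta_u d r i"

text \<open>Connected component of u in the power automaton (orbit under the maps delta_s).\<close>
definition orbit :: "('a \<Rightarrow> 'q \<Rightarrow> 'q) \<Rightarrow> ('q \<Rightarrow> 'a \<Rightarrow> 'a) \<Rightarrow> 'q list \<Rightarrow> 'q list set" where
  "orbit d r u = range (\<lambda>s. delta_s d r s u)"

text \<open>Edges of the orbit tree: pairs (top vertex, bottom vertex).\<close>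
definition tedge :: "('a \<Rightarrow> 'q \<Rightarrow> 'q) \<Rightarrow> ('q \<Rightarrow> 'a \<Rightarrow> 'a) \<Rightarrow> ('q list set \<times> 'q list set) set" where
  "tedge d r = {(orbit d r u, orbit d r (u @ [x])) | u x. True}"

definition label :: "('q list set \<times> 'q list set) \<Rightarrow> nat" where
  "label e = card (snd e) div card (fst e)"

definition lift_edge :: "('q list set \<times> 'q list set) \<Rightarrow> ('q list set \<times> 'q list set) \<Rightarrow> bool" where
  "lift_edge e f \<longleftrightarrow> (\<forall>w\<in>snd e. \<exists>w'\<in>snd f. suffix w' w)"

definition is_path :: "('a \<Rightarrow> 'q \<Rightarrow> 'q) \<Rightarrow> ('q \<Rightarrow> 'a \<Rightarrow> 'a) \<Rightarrow> nat \<Rightarrow> enat \<Rightarrow> (nat \<Rightarrow> 'q list set) \<Rightarrow> bool" where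
  "is_path d r l L v \<longleftrightarrow> (\<exists>u. length u = l \<and> v 0 = orbit d r u) \<and>
     (\<forall>j. enat j < L \<longrightarrow> (v j, v (Suc j)) \<in> tedge d r)"

definition path_in :: "('q list set \<times> 'q list set) set \<Rightarrow> enat \<Rightarrow> (nat \<Rightarrow> 'q list set) \<Rightarrow> bool" where
  "path_in S L v \<longleftrightarrow> (\<forall>j. enat j < L \<longrightarrow> (v j, v (Suc j)) \<in> S)"

text \<open>A subtree / path, given by its set of edges S, is k-self-liftable.\<close>
definition self_liftable_k :: "('a \<Rightarrow> 'q \<Rightarrow> 'q) \<Rightarrow> ('q \<Rightarrow> 'a \<Rightarrow> 'a) \<Rightarrow> nat \<Rightarrow> ('q list set \<times> 'q list set) set \<Rightarrow> bool" where
  "self_liftable_k d r k S \<longleftrightarrow>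
     (\<forall>i L v. is_path d r (i + k) L v \<and> path_in S L v \<longrightarrow>
        (\<exists>w. is_path d r i L w \<and> path_in S L w \<and>
             (\<forall>j. enat j < L \<longrightarrow> lift_edge (v j, v (Suc j)) (w j, w (Suc j)))))"

definition self_liftable :: "('a \<Rightarrow> 'q \<Rightarrow> 'q) \<Rightarrow> ('q \<Rightarrow> 'a \<Rightarrow> 'a) \<Rightarrow> ('q list set \<times> 'q list set) set \<Rightarrow> bool" where
  "self_liftable d r S \<longleftrightarrow> (\<exists>k>0. self_liftable_k d r k S)"

definition branch :: "('a \<Rightarrow> 'q \<Rightarrow> 'q) \<Rightarrow> ('q \<Rightarrow> 'a \<Rightarrow> 'a) \<Rightarrow> (nat \<Rightarrow> 'q list set) \<Rightarrow> bool" where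
  "branch d r v \<longleftrightarrow> is_path d r 0 \<infinity> v"

definition path_edges :: "enat \<Rightarrow> (nat \<Rightarrow> 'q list set) \<Rightarrow> ('q list set \<times> 'q list set) set" where
  "path_edges L v = {(v j, v (Suc j)) | j. enat j < L}"

definition active :: "(nat \<Rightarrow> 'q list set) \<Rightarrow> bool" where
  "active v \<longleftrightarrow> \<not> (\<exists>N. \<forall>j\<ge>N. label (v j, v (Suc j)) = 1)"

definition legit_child :: "('a \<Rightarrow> 'q \<Rightarrow> 'q) \<Rightarrow> ('q \<Rightarrow> 'a \<Rightarrow> 'a) \<Rightarrow> ('q list set \<times> 'q list set) \<Rightarrow> ('q list set \<times> 'q list set) \<Rightarrow> bool" where
  "legit_child d r e f \<longleftrightarrow> f \<in> tedge d r \<and> fst f = snd e \<and> lift_edge f e"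

definition jungle_tree :: "('a \<Rightarrow> 'q \<Rightarrow> 'q) \<Rightarrow> ('q \<Rightarrow> 'a \<Rightarrow> 'a) \<Rightarrow> ('q list set \<times> 'q list set) set \<Rightarrow> bool" where
  "jungle_tree d r J \<longleftrightarrow>
     (\<exists>n v. n > 0 \<and> is_path d r 0 (enat n) v \<and>
        self_liftable_k d r 1 (path_edges (enat n) v) \<and>
        (let e = (v (n - 1), v n) in
           (\<exists>f g. f \<noteq> g \<and> legit_child d r e f \<and> legit_child d r e g) \<and>
           (\<forall>f. legit_child d r e f \<longrightarrow> label f = 1) \<and>
           J = path_edges (enat n) v \<union>
               {f \<in> tedge d r. (snd e, fst f) \<in> (tedge d r)\<^sup>* \<and> lift_edge f e}))"

definition j_word :: "('a \<Rightarrow> 'q \<Rightarrow> 'q) \<Rightarrow> ('q \<Rightarrow> 'a \<Rightarrow> 'a) \<Rightarrow> ('q list set \<times> 'q list set) set \<Rightarrow> 'q list \<Rightarrow> bool" where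
  "j_word d r J u \<longleftrightarrow>
     (\<forall>j < length u. (orbit d r (take j u), orbit d r (take (Suc j) u)) \<in> J)"

definition cyclic_j_word :: "('a \<Rightarrow> 'q \<Rightarrow> 'q) \<Rightarrow> ('q \<Rightarrow> 'a \<Rightarrow> 'a) \<Rightarrow> ('q list set \<times> 'q list set) set \<Rightarrow> 'q list \<Rightarrow> bool" where
  "cyclic_j_word d r J u \<longleftrightarrow> (\<forall>m\<ge>1. j_word d r J (concat (replicate m u)))"

end

theory Submission
  imports Defs
begin


fun rl :: "('q \<Rightarrow> 'a \<Rightarrow> 'a) \<Rightarrow> 'q list \<Rightarrow> 'a \<Rightarrow> 'a" where
  "rl r [] = id"
| "rl r (x # a) = rl r a \<circ> r x"

lemma len_delta_u[simp]: "length (delta_u d r i w) = length w"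
  by (induction w arbitrary: i) auto

lemma len_delta_s[simp]: "length (delta_s d r s w) = length w"
  by (induction s arbitrary: w) auto

lemma len_rho_w[simp]: "length (rho_w d r x s) = length s"
  by (induction s arbitrary: x) auto

lemma len_rho_u[simp]: "length (rho_u d r w s) = length s"
  by (induction w arbitrary: s) auto

lemma rl_append: "rl r (a @ b) = rl r b \<circ> rl r a"
  by (induction a) auto

lemma delta_u_append: "delta_u d r i (a @ b) = delta_u d r i a @ delta_u d r (rl r a i) b"
  by (induction a arbitrary: i) auto

lemma rho_u_nil[simp]: "rho_u d r w [] = []"
proof (induction w)
  case Nil then show ?case by simp
next
  case (Cons x w) then show ?case by simp
qed

lemma rho_u_cons: "rho_u d r a (i # s) = rl r a i # rho_u d r (delta_u d r i a) s"
  by (induction a arbitrary: i s) auto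

lemma delta_s_append_w: "delta_s d r s (a @ b) = delta_s d r s a @ delta_s d r (rho_u d r a s) b"
proof (induction s arbitrary: a b)
  case Nil then show ?case by simp
next
  case (Cons i s) then show ?case by (simp add: delta_u_append rho_u_cons)
qed

lemma rho_u_append_s: "rho_u d r w (s @ t) = rho_u d r w s @ rho_u d r (delta_s d r s w) t"
  by (induction s arbitrary: w) (auto simp: rho_u_cons)

lemma rho_u_single: "rho_u d r w [i] = [rl r w i]"
  by (simp add: rho_u_cons)

lemma rho_u_append_w: "rho_u d r (a @ b) = rho_u d r b \<circ> rho_u d r a"
  by (induction a) auto

lemma delta_s_append_s: "delta_s d r (s @ t) = delta_s d r t \<circ> delta_s d r s"
  by (induction s) auto

lemma delta_s_pow: "delta_s d r (concat (replicate k s)) = delta_s d r s ^^ k"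
  by (induction k) (auto simp: delta_s_append_s fun_eq_iff funpow_swap1)

lemma rho_u_pow: "rho_u d r (concat (replicate k u)) = rho_u d r u ^^ k"
  by (induction k) (auto simp: rho_u_append_w fun_eq_iff funpow_swap1)

lemma rl_pow: "rl r (concat (replicate k u)) = rl r u ^^ k"
  by (induction k) (auto simp: rl_append fun_eq_iff funpow_swap1)

lemma inj_delta_u:
  assumes "\<And>i. inj (d i)" shows "inj (delta_u d r i)"
proof -
  have "delta_u d r i a = delta_u d r i b \<Longrightarrow> a = b" for a b
  proof (induction a arbitrary: i b)
    case Nil then show ?case by (cases b) auto
  next
    case (Cons x a) then show ?case
      by (cases b) (auto dest: injD[OF assms])
  qed
  then show ?thesis by (auto intro: injI)
qed

lemma inj_delta_s:
  assumes "\<And>i. inj (d i)" shows "inj (delta_s d r s)"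
proof (induction s)
  case Nil then show ?case by simp
next
  case (Cons i s) then show ?case using inj_compose[OF Cons.IH inj_delta_u[of d r i, OF assms]] by (simp add: comp_def)
qed

lemma inj_rho_w:
  assumes "\<And>x. inj (r x)" shows "inj (rho_w d r x)"
proof -
  have "rho_w d r x a = rho_w d r x b \<Longrightarrow> a = b" for a b
  proof (induction a arbitrary: x b)
    case Nil then show ?case by (cases b) auto
  next
    case (Cons i a) then show ?case
      by (cases b) (auto dest: injD[OF assms])
  qed
  then show ?thesis by (auto intro: injI)
qed

lemma inj_rho_u:
  assumes "\<And>x. inj (r x)" shows "inj (rho_u d r w)"
proof (induction w)
  case Nil then show ?case by simp
next
  case (Cons x w) then show ?case using inj_compose[OF Cons.IH inj_rho_w[of r d x, OF assms]] by (simp add: comp_def)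
qed

lemma bij_rl:
  assumes "\<And>x. bij (r x)" shows "bij (rl r w)"
proof (induction w)
  case Nil then show ?case by (simp add: bij_id[unfolded id_def])
next
  case (Cons x w) then show ?case using bij_comp[OF assms[of x] Cons.IH] by (simp add: comp_def)
qed

lemma orbit_self: "w \<in> orbit d r w"
  unfolding orbit_def by (metis delta_s.simps(1) id_apply rangeI)

lemma orbit_trans: "y \<in> orbit d r w \<Longrightarrow> orbit d r y \<subseteq> orbit d r w"
  unfolding orbit_def by (auto simp: delta_s_append_s) (metis comp_apply delta_s_append_s rangeI)

lemma orbit_len: "y \<in> orbit d r w \<Longrightarrow> length y = length w"
  unfolding orbit_def by auto

lemma finite_orbit: "finite (orbit d r (w :: 'q::finite list))"
proof -
  have "orbit d r w \<subseteq> {xs. length xs = length w}" using orbit_len by blast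
  then show ?thesis using finite_lists_length_eq[of "UNIV :: 'q set"] finite_subset by auto
qed

lemma pigeon:
  assumes "finite S" "\<And>i. i \<le> N \<Longrightarrow> f i \<in> S" "card S \<le> N"
  shows "\<exists>i j. i < j \<and> j \<le> N \<and> f i = f j"
proof (rule ccontr)
  assume "\<not> ?thesis"
  then have "inj_on f {0..N}" unfolding inj_on_def by (metis atLeastAtMost_iff linorder_neqE_nat)
  moreover have "f ` {0..N} \<subseteq> S" using assms(2) by auto
  ultimately have "card {0..N} \<le> card S" using card_inj_on_le assms(1) by blast
  then show False using assms(3) by simp
qed



lemma orbit_sym:
  fixes w :: "'q::finite list"
  assumes inj: "\<And>i. inj (d i)" and y: "y \<in> orbit d r w"
  shows "w \<in> orbit d r y"
proof -
  obtain s where ys: "y = delta_s d r s w" using y unfolding orbit_def by auto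
  define D where "D = delta_s d r s"
  define S where "S = {xs :: 'q list. length xs = length w}"
  have finS: "finite S" unfolding S_def using finite_lists_length_eq[of "UNIV :: 'q set"] by simp
  have "\<And>i. (D ^^ i) w \<in> S"
  proof -
    fix i show "(D ^^ i) w \<in> S" unfolding S_def D_def
      by (induction i) auto
  qed
  then obtain i j where ij: "i < j" "(D ^^ i) w = (D ^^ j) w"
    using pigeon[OF finS, of "card S" "\<lambda>i. (D ^^ i) w"] by auto
  have injDD: "inj D" unfolding D_def by (rule inj_delta_s[OF inj])
  have "(D ^^ j) w = (D ^^ i) ((D ^^ (j - i)) w)"
  proof -
    have "j = i + (j - i)" using ij(1) by simp
    then show ?thesis by (metis funpow_add comp_apply)
  qed
  then have "(D ^^ i) w = (D ^^ i) ((D ^^ (j - i)) w)" using ij(2) by simp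
  then have "w = (D ^^ (j - i)) w" using injD[OF inj_fn[OF injDD, of i]] by blast
  also have "\<dots> = (D ^^ (j - i - 1)) (D w)"
  proof -
    have "j - i = Suc (j - i - 1)" using ij(1) by simp
    then show ?thesis by (metis funpow_Suc_right comp_apply)
  qed
  also have "\<dots> = delta_s d r (concat (replicate (j - i - 1) s)) y"
    unfolding ys D_def delta_s_pow by simp
  finally show ?thesis unfolding orbit_def by auto
qed

lemma orbit_eq:
  fixes w :: "'q::finite list"
  assumes inj: "\<And>i. inj (d i)" and y: "y \<in> orbit d r w"
  shows "orbit d r y = orbit d r w"
  using orbit_trans[OF y] orbit_trans[OF orbit_sym[OF inj y]] by auto

lemma factor_orbit:
  assumes "k + l \<le> length w"
  shows "take l (drop k (delta_s d r s w)) \<in> orbit d r (take l (drop k w))"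
proof -
  have w: "w = take k w @ (take l (drop k w) @ drop l (drop k w))" by (metis append_take_drop_id)
  have lk: "length (take k w) = k" using assms by simp
  have ll: "length (take l (drop k w)) = l" using assms by simp
  have "delta_s d r s w = delta_s d r s (take k w) @ (delta_s d r (rho_u d r (take k w) s) (take l (drop k w))
       @ delta_s d r (rho_u d r (take l (drop k w)) (rho_u d r (take k w) s)) (drop l (drop k w)))"
    by (subst w) (simp only: delta_s_append_w)
  then have "take l (drop k (delta_s d r s w)) = delta_s d r (rho_u d r (take k w) s) (take l (drop k w))"
    using lk ll by simp
  then show ?thesis unfolding orbit_def by auto
qed

lemma prefix_delta:
  assumes "n \<le> length w"
  shows "take n (delta_s d r s w) = delta_s d r s (take n w)"
proof -
  have "delta_s d r s w = delta_s d r s (take n w) @ delta_s d r (rho_u d r (take n w) s) (drop n w)"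
    by (subst append_take_drop_id[symmetric, of w n]) (simp only: delta_s_append_w)
  then show ?thesis using assms by simp
qed

lemma drop1_orbit:
  assumes "y \<in> orbit d r z"
  shows "drop 1 y \<in> orbit d r (drop 1 z)"
proof -
  obtain s where y: "y = delta_s d r s z" using assms unfolding orbit_def by auto
  have "take (length z - 1) (drop 1 (delta_s d r s z)) \<in> orbit d r (take (length z - 1) (drop 1 z))"
  proof (cases "z = []")
    case True then show ?thesis by (simp add: orbit_self)
  next
    case False then show ?thesis by (intro factor_orbit) simp
  qed
  then show ?thesis using y by simp
qed

lemma univ_exp:
  fixes g :: "'a::finite \<Rightarrow> 'a"
  assumes "bij g"
  shows "g ^^ fact (card (UNIV :: ('a \<Rightarrow> 'a) set)) = id"
proof -
  define N where "N = card (UNIV :: ('a \<Rightarrow> 'a) set)"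
  obtain i j where ij: "i < j" "j \<le> N" "g ^^ i = g ^^ j"
    using pigeon[of "UNIV :: ('a \<Rightarrow> 'a) set" N "\<lambda>i. g ^^ i"] unfolding N_def by auto
  have bi: "bij (g ^^ i)" by (rule bij_fn[OF assms])
  have "g ^^ j = g ^^ (j - i) \<circ> g ^^ i"
  proof -
    have "j = (j - i) + i" using ij(1) by simp
    then show ?thesis by (metis funpow_add)
  qed
  then have "g ^^ (j - i) \<circ> g ^^ i = id \<circ> g ^^ i" using ij(3) by simp
  then have p: "g ^^ (j - i) = id" using bi
    by (metis bij_is_surj surj_fun_eq)
  have "(j - i) dvd fact N" using ij by (intro dvd_fact) auto
  then obtain q where "fact N = (j - i) * q" by (auto elim: dvdE)
  then have "g ^^ fact N = (g ^^ (j - i)) ^^ q" by (simp add: funpow_mult)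
  moreover have "(id::'a\<Rightarrow>'a) ^^ q = id" by (induction q) auto
  ultimately show ?thesis using p unfolding N_def by simp
qed



lemma det_lemma:
  fixes d :: "'a \<Rightarrow> 'q::finite \<Rightarrow> 'q" and r :: "'q \<Rightarrow> 'a \<Rightarrow> 'a"
  assumes inj: "\<And>i. inj (d i)"
    and B: "B = orbit d r w0" "length w0 = n"
    and e: "snd e = B"
    and lab: "\<And>f. legit_child d r e f \<Longrightarrow> label f = 1"
    and z: "length z = Suc n" "take n z \<in> B" "drop 1 z \<in> B"
    and w: "w1 \<in> orbit d r z" "w2 \<in> orbit d r z" "take n w1 = take n w2"
  shows "w1 = w2"
proof (rule ccontr)
  assume ne: "w1 \<noteq> w2"
  have oB: "orbit d r (take n z) = B" using orbit_eq[OF inj, where y="take n z" and w=w0 and r=r] z(2) B(1) by simp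
  have zsplit: "z = take n z @ [z ! n]" using z(1) take_Suc_conv_app_nth[of n z] by simp
  define f where "f = (orbit d r (take n z), orbit d r z)"
  have ft: "f \<in> tedge d r" unfolding f_def tedge_def
    by (subst (2) zsplit) blast
  have fl: "lift_edge f e" unfolding lift_edge_def f_def e
  proof
    fix w assume "w \<in> snd (orbit d r (take n z), orbit d r z)"
    then have "w \<in> orbit d r z" by simp
    then have "drop 1 w \<in> orbit d r (drop 1 z)" by (rule drop1_orbit)
    then have "drop 1 w \<in> B" using orbit_trans[of "drop 1 z" d r w0] z(3) B(1) by blast
    moreover have "suffix (drop 1 w) w" by (rule suffix_drop)
    ultimately show "\<exists>w'\<in>B. suffix w' w" by blast
  qed
  have "legit_child d r e f" unfolding legit_child_def using ft fl oB e f_def by simp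
  then have "label f = 1" by (rule lab)
  then have l1: "card (orbit d r z) div card B = 1" unfolding label_def f_def oB by simp
  have finB: "finite B" using B finite_orbit by simp
  have cB: "card B > 0" using finB B orbit_self[of w0 d r] card_gt_0_iff by blast
  have lt: "card (orbit d r z) < 2 * card B"
  proof -
    have "card (orbit d r z) = card B * (card (orbit d r z) div card B) + card (orbit d r z) mod card B"
      by simp
    also have "\<dots> < card B * 1 + card B" using l1 cB by simp
    finally show ?thesis by simp
  qed
  obtain s1 where s1: "w1 = delta_s d r s1 z" using w(1) unfolding orbit_def by auto
  have y1B: "take n w1 \<in> B"
  proof -
    have "take n w1 = delta_s d r s1 (take n z)" using s1 prefix_delta[of n z d r s1] z(1) by simp
    then have "take n w1 \<in> orbit d r (take n z)" unfolding orbit_def by auto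
    then show ?thesis using oB by simp
  qed
  have oy1: "orbit d r (take n w1) = B" using orbit_eq[OF inj, where y="take n w1" and w=w0 and r=r] y1B B(1) by simp
  have "\<forall>y\<in>B. \<exists>t. y = delta_s d r t (take n w1)" using oy1 unfolding orbit_def by auto
  then have "\<exists>t. \<forall>y\<in>B. y = delta_s d r (t y) (take n w1)" by (rule bchoice)
  then obtain t where t0: "\<forall>y\<in>B. y = delta_s d r (t y) (take n w1)" by blast
  have t: "\<And>y. y \<in> B \<Longrightarrow> y = delta_s d r (t y) (take n w1)" using t0 by blast
  define g where "g = (\<lambda>(y, b::bool). delta_s d r (t y) (if b then w1 else w2))"
  have lw: "length w1 = Suc n" "length w2 = Suc n" using orbit_len[OF w(1)] orbit_len[OF w(2)] z(1) by simp_all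
  have gt: "take n (g (y, b)) = y" if "y \<in> B" for y b
    using prefix_delta[of n w1 d r "t y"] prefix_delta[of n w2 d r "t y"] lw t[OF that] w(3)
    unfolding g_def by auto
  have "inj_on g (B \<times> UNIV)"
  proof (rule inj_onI)
    fix p q assume p: "p \<in> B \<times> UNIV" and q: "q \<in> B \<times> UNIV" and pq: "g p = g q"
    obtain y b where py: "p = (y, b)" by fastforce
    obtain y' b' where qy: "q = (y', b')" by fastforce
    have yB: "y \<in> B" "y' \<in> B" using p q py qy by auto
    have yy: "y = y'" using gt[OF yB(1), of b] gt[OF yB(2), of b'] pq py qy by simp
    show "p = q"
    proof (rule ccontr)
      assume "p \<noteq> q"
      then have "b \<noteq> b'" using py qy yy by blast
      have "g (y, b) = g (y, b')" using pq py qy yy by simp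
      then have gg: "delta_s d r (t y) (if b then w1 else w2) = delta_s d r (t y) (if b' then w1 else w2)"
        unfolding g_def by simp
      have "delta_s d r (t y) w1 = delta_s d r (t y) w2"
      proof (cases b)
        case True then have "\<not> b'" using \<open>b \<noteq> b'\<close> by simp
        then show ?thesis using gg True by simp
      next
        case False then have "b'" using \<open>b \<noteq> b'\<close> by simp
        then show ?thesis using gg False by simp
      qed
      moreover have "inj (delta_s d r (t y))" by (rule inj_delta_s[OF inj])
      ultimately show False using ne by (simp add: inj_eq)
    qed
  qed
  moreover have "g ` (B \<times> UNIV) \<subseteq> orbit d r z"
  proof
    fix x assume "x \<in> g ` (B \<times> UNIV)"
    then obtain y b where x: "x = g (y, b)" by auto
    show "x \<in> orbit d r z"
    proof -
      have "delta_s d r (t y) w1 \<in> orbit d r w1" "delta_s d r (t y) w2 \<in> orbit d r w2"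
        unfolding orbit_def by blast+
      then show ?thesis using orbit_trans[OF w(1)] orbit_trans[OF w(2)] x unfolding g_def
        by (cases b) auto
    qed
  qed
  ultimately have "card (B \<times> (UNIV :: bool set)) \<le> card (orbit d r z)"
    using card_inj_on_le[OF _ _ finite_orbit] by blast
  then have "2 * card B \<le> card (orbit d r z)" by (simp add: card_cartesian_product)
  then show False using lt by simp
qed



lemma nth_concat_replicate:
  assumes "x < M * length u"
  shows "concat (replicate M u) ! x = u ! (x mod length u)"
  using assms
proof (induction M arbitrary: x)
  case 0 then show ?case by simp
next
  case (Suc M)
  show ?case
  proof (cases "x < length u")
    case True then show ?thesis by (simp add: nth_append)
  next
    case False
    then have "x - length u < M * length u" using Suc.prems by simp
    then show ?thesis using False Suc.IH[of "x - length u"] by (simp add: nth_append mod_if)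
  qed
qed

lemma seg_lemma:
  assumes per: "\<And>x. y \<le> x \<Longrightarrow> x + P < length W \<Longrightarrow> W ! x = W ! (x + P)"
    and len: "y + K * P \<le> length W"
  shows "take (K * P) (drop y W) = concat (replicate K (take P (drop y W)))"
  using len
proof (induction K)
  case 0 then show ?case by simp
next
  case (Suc K)
  have a: "take (K * P) (drop (y + P) W) = take (K * P) (drop y W)"
  proof (rule nth_equalityI)
    show "length (take (K * P) (drop (y + P) W)) = length (take (K * P) (drop y W))"
      using Suc.prems by simp
    fix x assume "x < length (take (K * P) (drop (y + P) W))"
    then have x: "x < K * P" "y + P + x < length W" using Suc.prems by auto
    then show "take (K * P) (drop (y + P) W) ! x = take (K * P) (drop y W) ! x"
      using per[of "y + x"] Suc.prems by (simp add: add.commute add.left_commute)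
  qed
  have "take (Suc K * P) (drop y W) = take P (drop y W) @ take (K * P) (drop P (drop y W))"
    by (simp add: take_add)
  also have "\<dots> = take P (drop y W) @ take (K * P) (drop y W)" using a by (simp add: add.commute)
  also have "\<dots> = concat (replicate (Suc K) (take P (drop y W)))" using Suc by simp
  finally show ?case .
qed



lemma len_concat_rep: "length (concat (replicate m u)) = m * length u"
  by (induction m) auto

lemma core:
  fixes d :: "'a::finite \<Rightarrow> 'q::finite \<Rightarrow> 'q" and r :: "'q \<Rightarrow> 'a \<Rightarrow> 'a"
  assumes inj: "\<And>i. inj (d i)" and bijr: "\<And>x. bij (r x)"
    and B: "B = orbit d r w0" "length w0 = n"
    and e: "snd e = B"
    and lab: "\<And>f. legit_child d r e f \<Longrightarrow> label f = 1"
    and Fstar: "\<And>M k. k + n \<le> M * length u \<Longrightarrow> take n (drop k (concat (replicate M u))) \<in> B"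
    and u: "u \<noteq> []"
  shows "rho_u d r u ^^ (fact (card B) * fact (card (UNIV :: ('a \<Rightarrow> 'a) set))) = id"
proof -
  define b where "b = card B"
  define K0 where "K0 = (fact (card (UNIV :: ('a \<Rightarrow> 'a) set)) :: nat)"
  define E where "E = (fact b :: nat) * K0"
  define A where "A = b"
  define L where "L = length u"
  define U where "U = (\<lambda>m. concat (replicate m u))"
  define M where "M = A + E + n + 1"
  have L0: "L > 0" using u L_def by simp
  have lenU: "\<And>m. length (U m) = m * L" unfolding U_def L_def by (rule len_concat_rep)
  have Unth: "\<And>m x. x < m * L \<Longrightarrow> U m ! x = u ! (x mod L)"
    unfolding U_def L_def by (rule nth_concat_replicate)
  have finB: "finite B" using B finite_orbit by simp
  have hML: "(A + E + n + 1) * L \<le> M * L" unfolding M_def by simp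
  have hML2: "A * L + E * L + n + 1 \<le> M * L"
  proof -
    have "(A + E + n + 1) * L = A * L + E * L + (n + 1) * L" by (simp add: algebra_simps)
    moreover have "n + 1 \<le> (n + 1) * L" using mult_le_mono2[of 1 L "n+1"] L0 by simp
    ultimately show ?thesis using hML by linarith
  qed
  have rlq: "rl r (delta_s d r s (U (A + E))) = rl r (delta_s d r s (U A))" for s
  proof -
    define W where "W = delta_s d r s (U M)"
    have lenW: "length W = M * L" unfolding W_def using lenU by simp
    have zG: "length (take (Suc n) (drop k (U M))) = Suc n \<and> take n (take (Suc n) (drop k (U M))) \<in> B
        \<and> drop 1 (take (Suc n) (drop k (U M))) \<in> B" if "k + Suc n \<le> M * L" for k
    proof (intro conjI)
      show "length (take (Suc n) (drop k (U M))) = Suc n" using that lenU by simp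
      have "take n (drop k (U M)) \<in> B" using Fstar[of k M] that unfolding U_def L_def by simp
      then show "take n (take (Suc n) (drop k (U M))) \<in> B" by (simp add: min_def)
      have "take n (drop (Suc k) (U M)) \<in> B" using Fstar[of "Suc k" M] that unfolding U_def L_def by simp
      moreover have "drop 1 (take (Suc n) (drop k (U M))) = take n (drop (Suc k) (U M))"
        by (simp add: drop_take)
      ultimately show "drop 1 (take (Suc n) (drop k (U M))) \<in> B" by simp
    qed
    have zper: "take (Suc n) (drop (k + c * L) (U M)) = take (Suc n) (drop k (U M))"
      if "k + c * L + Suc n \<le> M * L" for k c
    proof (rule nth_equalityI)
      show "length (take (Suc n) (drop (k + c * L) (U M))) = length (take (Suc n) (drop k (U M)))"
        using that lenU by simp
      fix i assume "i < length (take (Suc n) (drop (k + c * L) (U M)))"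
      then have i: "i < Suc n" using that lenU by simp
      have "U M ! (k + c * L + i) = u ! ((k + c * L + i) mod L)" using i that by (intro Unth) simp
      also have "(k + c * L + i) mod L = (k + i) mod L"
      proof -
        have "k + c * L + i = (k + i) + c * L" by simp
        then show ?thesis by (simp only: mod_mult_self1)
      qed
      also have "u ! ((k + i) mod L) = U M ! (k + i)" using i that by (intro Unth[symmetric]) simp
      finally show "take (Suc n) (drop (k + c * L) (U M)) ! i = take (Suc n) (drop k (U M)) ! i"
        using i that lenU by (simp add: add.commute add.left_commute)
    qed
    have det': "W ! (k + n) = W ! (k + c * L + n)"
      if kc: "k + c * L + Suc n \<le> M * L" and eq: "\<forall>i<n. W ! (k + i) = W ! (k + c * L + i)" for k c
    proof -
      define z where "z = take (Suc n) (drop k (U M))"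
      have k1: "k + Suc n \<le> M * L" using kc by simp
      have w1: "take (Suc n) (drop k W) \<in> orbit d r z"
        unfolding z_def W_def by (rule factor_orbit) (use k1 lenU in simp)
      have w2: "take (Suc n) (drop (k + c * L) W) \<in> orbit d r z"
      proof -
        have "take (Suc n) (drop (k + c * L) W) \<in> orbit d r (take (Suc n) (drop (k + c * L) (U M)))"
          unfolding W_def by (rule factor_orbit) (use kc lenU in simp)
        then show ?thesis using zper[OF kc] z_def by simp
      qed
      have tk: "take n (take (Suc n) (drop k W)) = take n (take (Suc n) (drop (k + c * L) W))"
      proof (rule nth_equalityI)
        show "length (take n (take (Suc n) (drop k W))) = length (take n (take (Suc n) (drop (k + c * L) W)))"
          using kc lenW by simp
        fix i assume "i < length (take n (take (Suc n) (drop k W)))"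
        then have i: "i < n" using kc lenW by simp
        then show "take n (take (Suc n) (drop k W)) ! i = take n (take (Suc n) (drop (k + c * L) W)) ! i"
          using eq kc lenW by simp
      qed
      have zz: "length z = Suc n" "take n z \<in> B" "drop 1 z \<in> B" unfolding z_def using zG[OF k1] by blast+
      have "take (Suc n) (drop k W) = take (Suc n) (drop (k + c * L) W)"
        by (rule det_lemma[OF inj B e lab zz w1 w2 tk])
      then have "take (Suc n) (drop k W) ! n = take (Suc n) (drop (k + c * L) W) ! n" by simp
      then show ?thesis using kc lenW by simp
    qed
    have hprop: "W ! (k + x) = W ! (k + c * L + x)"
      if eq: "\<forall>i<n. W ! (k + i) = W ! (k + c * L + i)" and x: "k + c * L + x < M * L" for k c x
      using x
    proof (induction x rule: less_induct)
      case (less x)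
      show ?case
      proof (cases "x < n")
        case True then show ?thesis using eq by simp
      next
        case False
        define x' where "x' = x - n"
        have xx: "x = x' + n" using False x'_def by simp
        have eq': "\<forall>i<n. W ! (k + x' + i) = W ! (k + x' + c * L + i)"
        proof (intro allI impI)
          fix i assume "i < n"
          then have "x' + i < x" "k + c * L + (x' + i) < M * L" using xx less.prems by auto
          then have h: "W ! (k + (x' + i)) = W ! (k + c * L + (x' + i))" using less.IH by blast
          have e1: "k + (x' + i) = k + x' + i" by simp
          have e2: "k + c * L + (x' + i) = k + x' + c * L + i" by simp
          show "W ! (k + x' + i) = W ! (k + x' + c * L + i)" using h unfolding e1 e2 .
        qed
        have "k + x' + c * L + Suc n \<le> M * L" using xx less.prems by simp
        then have h: "W ! (k + x' + n) = W ! (k + x' + c * L + n)" using det' eq' by blast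
        have e3: "k + x = k + x' + n" using xx by simp
        have e4: "k + c * L + x = k + x' + c * L + n" using xx by simp
        show ?thesis unfolding e3 e4 by (rule h)
      qed
    qed
    define Y where "Y = (\<lambda>j. take n (drop (j * L) W))"
    have YB: "Y j \<in> B" if "j \<le> b" for j
    proof -
      have jA: "j * L \<le> A * L" using that A_def by simp
      then have jl: "j * L + n \<le> M * L" using hML2 by linarith
      have "Y j \<in> orbit d r (take n (drop (j * L) (U M)))"
        unfolding Y_def W_def by (rule factor_orbit) (use jl lenU in simp)
      moreover have "take n (drop (j * L) (U M)) \<in> B" using Fstar[of "j * L" M] jl unfolding U_def L_def by simp
      ultimately show ?thesis using orbit_trans B(1) by blast
    qed
    obtain i i' where ii: "i < i'" "i' \<le> b" "Y i = Y i'"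
      using pigeon[OF finB, of b Y] YB b_def by auto
    define c where "c = i' - i"
    have c1: "c \<ge> 1" "c \<le> b" using ii c_def by auto
    have ic: "i * L + c * L = i' * L" using ii c_def by (simp add: add_mult_distrib[symmetric])
    have "i' \<le> A" using ii(2) A_def by simp
    then have "i' * L \<le> A * L" by (rule mult_le_mono1)
    then have i'L: "i' * L + n \<le> M * L" using hML2 by linarith
    have eq0: "\<forall>i0<n. W ! (i * L + i0) = W ! (i * L + c * L + i0)"
    proof (intro allI impI)
      fix i0 assume i0: "i0 < n"
      have "Y i ! i0 = Y i' ! i0" using ii(3) by simp
      then have h: "drop (i * L) W ! i0 = drop (i' * L) W ! i0" unfolding Y_def using i0 by simp
      have "i \<le> M" "i' \<le> M" using ii A_def M_def by simp_all
      then have l1: "i * L \<le> length W" "i' * L \<le> length W" using lenW by simp_all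
      show "W ! (i * L + i0) = W ! (i * L + c * L + i0)"
        using h unfolding ic by (simp add: nth_drop[OF l1(1)] nth_drop[OF l1(2)])
    qed
    have per1: "W ! y = W ! (y + c * L)" if "i * L \<le> y" "y + c * L < M * L" for y
    proof -
      have e1: "i * L + (y - i * L) = y" using that by simp
      have e2: "i * L + c * L + (y - i * L) = y + c * L" using that by simp
      have "i * L + c * L + (y - i * L) < M * L" using e2 that by simp
      then have "W ! (i * L + (y - i * L)) = W ! (i * L + c * L + (y - i * L))"
        by (rule hprop[OF eq0])
      then show ?thesis unfolding e1 e2 .
    qed
    have perq: "W ! y = W ! (y + q * (c * L))" if "i * L \<le> y" "y + q * (c * L) < M * L" for q y
      using that(2)
    proof (induction q)
      case 0 then show ?case by simp
    next
      case (Suc q)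
      have a: "W ! y = W ! (y + q * (c * L))" using Suc by simp
      have "W ! (y + q * (c * L)) = W ! (y + q * (c * L) + c * L)"
        using per1[of "y + q * (c * L)"] that(1) Suc.prems by simp
      then show ?case using a by (simp add: add.commute add.left_commute)
    qed
    have "c dvd fact b" using c1 by (intro dvd_fact) auto
    then obtain q0 where q0: "fact b = c * q0" by (auto elim: dvdE)
    define P where "P = fact b * L"
    have perP: "W ! y = W ! (y + P)" if "A * L \<le> y" "y + P < length W" for y
    proof -
      have "i \<le> A" using ii A_def by simp
      then have "i * L \<le> A * L" by (rule mult_le_mono1)
      then have iy: "i * L \<le> y" using that(1) by linarith
      have PP: "P = q0 * (c * L)" unfolding P_def q0 by simp
      have "y + q0 * (c * L) < M * L" using that(2) lenW PP by simp
      then show ?thesis unfolding PP by (rule perq[OF iy])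
    qed
    have KP: "K0 * P = E * L" unfolding P_def E_def by simp
    have seg: "take (K0 * P) (drop (A * L) W) = concat (replicate K0 (take P (drop (A * L) W)))"
      by (rule seg_lemma[OF perP]) (use KP hML2 lenW in simp_all)
    have rlseg: "rl r (take (E * L) (drop (A * L) W)) = id"
    proof -
      have "rl r (take (E * L) (drop (A * L) W)) = rl r (take P (drop (A * L) W)) ^^ K0"
        unfolding KP[symmetric] seg rl_pow ..
      also have "\<dots> = id" unfolding K0_def by (rule univ_exp[OF bij_rl[OF bijr]])
      finally show ?thesis .
    qed
    have UM: "U M = U A @ (U E @ U (n + 1))" unfolding U_def M_def by (simp only: add.assoc replicate_add concat_append)
    have UAE: "U (A + E) = U A @ U E" unfolding U_def by (simp add: replicate_add)
    define s1 where "s1 = rho_u d r (U A) s"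
    have W2: "W = delta_s d r s (U A) @ (delta_s d r s1 (U E) @ delta_s d r (rho_u d r (U E) s1) (U (n + 1)))"
      unfolding W_def UM s1_def by (simp only: delta_s_append_w)
    have segE: "take (E * L) (drop (A * L) W) = delta_s d r s1 (U E)"
      unfolding W2 using lenU by simp
    have "delta_s d r s (U (A + E)) = delta_s d r s (U A) @ delta_s d r s1 (U E)"
      unfolding UAE s1_def by (simp only: delta_s_append_w)
    then show ?thesis using rlseg segE by (simp add: rl_append)
  qed
  have rhoq: "rho_u d r (U (A + E)) s = rho_u d r (U A) s" for s
  proof (induction s rule: rev_induct)
    case Nil then show ?case by simp
  next
    case (snoc i s)
    then show ?case using rlq[of s] by (simp add: rho_u_append_s rho_u_single)
  qed
  have "U (A + E) = U E @ U A" unfolding U_def by (subst add.commute) (simp add: replicate_add)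
  then have c1: "rho_u d r (U A) \<circ> rho_u d r (U E) = rho_u d r (U A)"
    using rhoq by (simp add: rho_u_append_w fun_eq_iff)
  have injA: "inj (rho_u d r (U A))" using inj_rho_u[of r d "U A"] bijr bij_is_inj by blast
  have "rho_u d r (U E) = id"
  proof (rule ext)
    fix x
    have "rho_u d r (U A) (rho_u d r (U E) x) = rho_u d r (U A) x"
      using c1 by (metis comp_apply)
    then show "rho_u d r (U E) x = id x" using injD[OF injA] by simp
  qed
  then show ?thesis unfolding E_def K0_def b_def U_def rho_u_pow by simp
qed



theorem proposition5p3:
  fixes d :: "'a::finite \<Rightarrow> 'q::finite \<Rightarrow> 'q"
    and r :: "'q \<Rightarrow> 'a \<Rightarrow> 'a"
    and J :: "('q list set \<times> 'q list set) set"
  assumes "connected_aut d"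
    and "bireversible d r"
    and "\<forall>v. branch d r v \<and> active v \<longrightarrow> \<not> self_liftable d r (path_edges \<infinity> v)"
    and "jungle_tree d r J"
  shows "\<exists>C::nat. \<forall>u. cyclic_j_word d r J u \<longrightarrow>
           (\<exists>m. 0 < m \<and> m \<le> C \<and> (rho_u d r u ^^ m) = id)"
proof -
  have inj: "\<And>i. inj (d i)" using assms(2) unfolding bireversible_def reversible_def
    by (simp add: bij_is_inj)
  have bijr: "\<And>x. bij (r x)" using assms(2) unfolding bireversible_def invertible_def by simp
  from assms(4) obtain n v where n0: "n > 0" and pth: "is_path d r 0 (enat n) v"
    and rest: "let e = (v (n - 1), v n) in
           (\<exists>f g. f \<noteq> g \<and> legit_child d r e f \<and> legit_child d r e g) \<and>
           (\<forall>f. legit_child d r e f \<longrightarrow> label f = 1) \<and>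
           J = path_edges (enat n) v \<union>
               {f \<in> tedge d r. (snd e, fst f) \<in> (tedge d r)\<^sup>* \<and> lift_edge f e}"
    unfolding jungle_tree_def by blast
  define e where "e = (v (n - 1), v n)"
  have lab: "\<And>f. legit_child d r e f \<Longrightarrow> label f = 1"
    using rest unfolding e_def Let_def by blast
  have Jd: "J = path_edges (enat n) v \<union>
               {f \<in> tedge d r. (snd e, fst f) \<in> (tedge d r)\<^sup>* \<and> lift_edge f e}"
    using rest unfolding e_def Let_def by blast
  have se: "snd e = v n" unfolding e_def by simp
  have lev: "\<exists>w. length w = j \<and> v j = orbit d r w" if "j \<le> n" for j
    using that
  proof (induction j)
    case 0 then show ?case using pth unfolding is_path_def by auto
  next
    case (Suc j)
    then obtain w where w: "length w = j" "v j = orbit d r w" by auto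
    have "enat j < enat n" using Suc.prems by simp
    then have "(v j, v (Suc j)) \<in> tedge d r" using pth unfolding is_path_def by blast
    then obtain a x where ax: "v j = orbit d r a" "v (Suc j) = orbit d r (a @ [x])"
      unfolding tedge_def by blast
    have "a \<in> v j" using ax(1) orbit_self by metis
    then have "length a = j" using w orbit_len by metis
    then show ?case using ax(2) by (intro exI[of _ "a @ [x]"]) simp
  qed
  have levlen: "length y = j" if "j \<le> n" "y \<in> v j" for j y
    using lev[OF that(1)] that(2) orbit_len by metis
  obtain w0 where w0: "length w0 = n" "v n = orbit d r w0" using lev[of n] by auto
  have Fstar: "take n (drop k (concat (replicate M u))) \<in> v n"
    if cyc: "cyclic_j_word d r J u" and u: "u \<noteq> []" and km: "k + n \<le> M * length u" for u M k
  proof -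
    define L where "L = length u"
    define U' where "U' = concat (replicate (Suc M) u)"
    have U'u: "U' = u @ concat (replicate M u)" unfolding U'_def by simp
    have lenU': "length U' = L + M * L" unfolding U'_def L_def by (simp add: len_concat_rep)
    define j where "j = k + L + n - 1"
    have L0: "L > 0" using u L_def by simp
    have jS: "Suc j = k + L + n" unfolding j_def using n0 L0 by simp
    have jw: "j_word d r J U'" using cyc unfolding cyclic_j_word_def U'_def
      by (metis le_add1 plus_1_eq_Suc)
    have jl: "j < length U'" using lenU' jS km L_def by simp
    have edge: "(orbit d r (take j U'), orbit d r (take (Suc j) U')) \<in> J"
      using jw jl unfolding j_word_def by blast
    have notp: "(orbit d r (take j U'), orbit d r (take (Suc j) U')) \<notin> path_edges (enat n) v"
    proof
      assume "(orbit d r (take j U'), orbit d r (take (Suc j) U')) \<in> path_edges (enat n) v"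
      then obtain i where i: "enat i < enat n" "orbit d r (take j U') = v i"
        unfolding path_edges_def by blast
      have "i \<le> n" using i(1) by simp
      moreover have "take j U' \<in> v i" using i(2) orbit_self by metis
      ultimately have "length (take j U') = i" using levlen by blast
      moreover have "length (take j U') = j" using jl by simp
      moreover have "j \<ge> n" using jS L0 by simp
      ultimately show False using i(1) by simp
    qed
    then have "lift_edge (orbit d r (take j U'), orbit d r (take (Suc j) U')) e"
      using edge Jd by blast
    then have "\<exists>w'\<in>v n. suffix w' (take (Suc j) U')"
      unfolding lift_edge_def se using orbit_self by fastforce
    then obtain w' where w': "w' \<in> v n" "suffix w' (take (Suc j) U')" by blast
    have lw': "length w' = n" using levlen[of n w'] w'(1) by simp
    obtain zs where zs: "take (Suc j) U' = zs @ w'" using w'(2) unfolding suffix_def by blast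
    have lzs: "length zs = k + L" using zs lw' jl jS
      by (metis add_diff_cancel_right' length_append length_take min.absorb2 Suc_leI)
    have "w' = drop (k + L) (take (Suc j) U')" using zs lzs by simp
    also have "\<dots> = take n (drop (k + L) U')" unfolding jS by (simp add: drop_take)
    also have "\<dots> = take n (drop k (concat (replicate M u)))" unfolding U'u L_def
      by (simp add: add.commute)
    finally show ?thesis using w'(1) by simp
  qed
  define C where "C = (fact (card (v n)) * fact (card (UNIV :: ('a \<Rightarrow> 'a) set)) :: nat)"
  have C0: "C > 0" unfolding C_def by simp
  show ?thesis
  proof (rule exI[of _ C], intro allI impI)
    fix u assume cyc: "cyclic_j_word d r J u"
    show "\<exists>m>0. m \<le> C \<and> rho_u d r u ^^ m = id"
    proof (cases "u = []")
      case True
      have "(id :: 'a list \<Rightarrow> 'a list) ^^ C = id" by (induction C) auto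
      then show ?thesis using True C0 by auto
    next
      case False
      have "rho_u d r u ^^ C = id" unfolding C_def
        by (rule core[OF inj bijr w0(2) w0(1) se lab Fstar[OF cyc False]]) (assumption | rule False)+
      then show ?thesis using C0 by auto
    qed
  qed
qed

end
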